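(* Let $X$ be a real normed space, let $C$ be a non-empty convex subset of $X$, and let $f:X\times X\to\mathbb{R}$ be a bifunction such that for each $x\in C$ the function $f(x,\cdot)$ is lower semicontinuous. If $f$ is properly quasi-monotone on $C$, then $f$ has the star finite intersection property (fip$^*$) on $C$.
   Context: A bifunction $f:X\times X\to\mathbb{R}$ is properly quasi-monotone on a convex set $C\subset X$ if for every finite non-empty subset $A$ of $C$ and every $x\in\operatorname{co}(A)$ (the convex hull of $A$) one has $\min_{a\in A} f(a,x)\leq 0$. The bifunction $f$ has the star finite intersection property (fip$^*$) on a convex set $C\subset X$ if for every finite non-empty subset $A$ of $C$ there exists $x\in\operatorname{co}(A)$ such that $\max_{a\in A} f(a,x)\leq 0$. *)

theory Defs
  imports "HOL-Analysis.Analysis"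
begin

definition lsc :: "('a::topological_space \<Rightarrow> real) \<Rightarrow> bool" where
  "lsc g \<longleftrightarrow> (\<forall>t::real. closed {y. g y \<le> t})"

definition properly_quasi_monotone :: "('a::real_vector \<Rightarrow> 'a \<Rightarrow> real) \<Rightarrow> 'a set \<Rightarrow> bool" where
  "properly_quasi_monotone f C \<longleftrightarrow>
     (\<forall>A. finite A \<and> A \<noteq> {} \<and> A \<subseteq> C \<longrightarrow> (\<forall>x \<in> convex hull A. Min ((\<lambda>a. f a x) ` A) \<le> 0))"

definition fip_star :: "('a::real_vector \<Rightarrow> 'a \<Rightarrow> real) \<Rightarrow> 'a set \<Rightarrow> bool" where
  "fip_star f C \<longleftrightarrow>
     (\<forall>A. finite A \<and> A \<noteq> {} \<and> A \<subseteq> C \<longrightarrow> (\<exists>x \<in> convex hull A. Max ((\<lambda>a. f a x) ` A) \<le> 0))"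

end

theory Submission
  imports Defs
begin


lemma approx_fixpoint:
  fixes F :: "(nat \<Rightarrow> real) \<Rightarrow> (nat \<Rightarrow> real)" and n :: nat and K d :: real
  assumes n: "0 < n" and K: "0 \<le> K" and d: "0 < d"
   and maps: "\<And>x i. (\<forall>j<n. 0 \<le> x j \<and> x j \<le> 1) \<Longrightarrow> i < n \<Longrightarrow> 0 \<le> F x i \<and> F x i \<le> 1"
   and lip: "\<And>x y. (\<forall>j<n. 0 \<le> x j \<and> x j \<le> 1) \<Longrightarrow> (\<forall>j<n. 0 \<le> y j \<and> y j \<le> 1) \<Longrightarrow>
        (\<Sum>i<n. \<bar>F x i - F y i\<bar>) \<le> K * (\<Sum>i<n. \<bar>x i - y i\<bar>)"
  shows "\<exists>z. (\<forall>j<n. 0 \<le> z j \<and> z j \<le> 1) \<and> (\<Sum>i<n. \<bar>F z i - z i\<bar>) < d"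
proof (rule ccontr)
  assume "\<not> ?thesis"
  hence far: "\<And>z. (\<forall>j<n. 0 \<le> z j \<and> z j \<le> 1) \<Longrightarrow> d \<le> (\<Sum>i<n. \<bar>F z i - z i\<bar>)"
    by (meson not_less)
  define lab where "lab x i = (if x i = 0 then 0 else if x i = 1 then 1
      else if x i \<le> F x i then 0 else (1::nat))" for x i
  obtain p :: nat where p: "(3*K+3) * n * n / d < real p"
    using reals_Archimedean2 by blast
  have "0 \<le> (3*K+3) * n * n / d" using K d by simp
  hence p0: "0 < p" using p by linarith
  define emb where "emb v = (\<lambda>j. real (v j) / real p)" for v :: "nat \<Rightarrow> nat"
  have inQ: "\<forall>j<n. 0 \<le> emb v j \<and> emb v j \<le> 1" if "\<forall>j<n. v j \<le> p" for v
    using that p0 by (auto simp: emb_def divide_le_eq_1)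
  obtain q where q: "\<forall>i<n. q i < p"
    "\<forall>i<n. \<exists>r s. (\<forall>j<n. q j \<le> r j \<and> r j \<le> q j + 1) \<and> (\<forall>j<n. q j \<le> s j \<and> s j \<le> q j + 1)
        \<and> lab (emb r) i \<noteq> lab (emb s) i"
  proof (rule kuhn_lemma[of p n "\<lambda>v. lab (emb v)"])
    show "0 < p" by (rule p0)
    show "\<forall>x. (\<forall>i<n. x i \<le> p) \<longrightarrow> (\<forall>i<n. lab (emb x) i = 0 \<or> lab (emb x) i = 1)"
      by (auto simp: lab_def)
    show "\<forall>x. (\<forall>i<n. x i \<le> p) \<longrightarrow> (\<forall>i<n. x i = 0 \<longrightarrow> lab (emb x) i = 0)"
      by (auto simp: lab_def emb_def)
    show "\<forall>x. (\<forall>i<n. x i \<le> p) \<longrightarrow> (\<forall>i<n. x i = p \<longrightarrow> lab (emb x) i = 1)"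
      using p0 by (auto simp: lab_def emb_def)
  qed blast
  define z where "z = emb q"
  have zQ: "\<forall>j<n. 0 \<le> z j \<and> z j \<le> 1" unfolding z_def
    by (rule inQ) (use q(1) in auto)
  have close: "(\<Sum>j<n. \<bar>emb r j - z j\<bar>) \<le> n / p" if "\<forall>j<n. q j \<le> r j \<and> r j \<le> q j + 1" for r
  proof -
    have "(\<Sum>j<n. \<bar>emb r j - z j\<bar>) \<le> (\<Sum>j<n. 1 / p)"
    proof (rule sum_mono)
      fix j assume "j \<in> {..<n}"
      with that have "q j \<le> r j" "r j \<le> q j + 1" by auto
      hence "\<bar>real (r j) - real (q j)\<bar> \<le> 1" by linarith
      thus "\<bar>emb r j - z j\<bar> \<le> 1 / p"
        using p0 by (simp add: emb_def z_def diff_divide_distrib[symmetric] abs_divide divide_right_mono)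
    qed
    thus ?thesis by simp
  qed
  have coord: "\<bar>F z i - z i\<bar> < d / n" if i: "i < n" for i
  proof -
    obtain r s where rs: "\<forall>j<n. q j \<le> r j \<and> r j \<le> q j + 1" "\<forall>j<n. q j \<le> s j \<and> s j \<le> q j + 1"
      "lab (emb r) i \<noteq> lab (emb s) i"
      using q(2) i by blast
    define x where "x = emb r"
    define y where "y = emb s"
    have xQ: "\<forall>j<n. 0 \<le> x j \<and> x j \<le> 1" unfolding x_def
      by (rule inQ) (use rs(1) q(1) in fastforce)
    have yQ: "\<forall>j<n. 0 \<le> y j \<and> y j \<le> 1" unfolding y_def
      by (rule inQ) (use rs(2) q(1) in fastforce)
    have xz: "(\<Sum>j<n. \<bar>x j - z j\<bar>) \<le> n / p" unfolding x_def using close rs(1) by blast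
    have yz: "(\<Sum>j<n. \<bar>y j - z j\<bar>) \<le> n / p" unfolding y_def using close rs(2) by blast
    have "(\<Sum>j<n. \<bar>x j - y j\<bar>) \<le> (\<Sum>j<n. \<bar>x j - z j\<bar> + \<bar>y j - z j\<bar>)"
      by (rule sum_mono) auto
    also have "\<dots> \<le> 2 * n / p" using xz yz by (simp add: sum.distrib)
    finally have xy: "(\<Sum>j<n. \<bar>x j - y j\<bar>) \<le> 2 * n / p" .
    have one: "\<bar>v i\<bar> \<le> (\<Sum>j<n. \<bar>v j\<bar>)" for v :: "nat \<Rightarrow> real"
      using i by (intro member_le_sum) auto
    have Fx: "\<bar>F x i - x i\<bar> \<le> \<bar>F x i - F y i\<bar> + \<bar>x i - y i\<bar>"
    proof -
      have lx: "lab x i \<le> 1" "lab y i \<le> 1" by (auto simp: lab_def)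
      have mx: "0 \<le> F x i" "F x i \<le> 1" "0 \<le> F y i" "F y i \<le> 1" using maps xQ yQ i by auto
      have a0: "x i \<le> F x i" if "lab x i = 0" using that mx by (auto simp: lab_def split: if_splits)
      have a1: "F x i \<le> x i" if "lab x i = 1" using that mx by (auto simp: lab_def split: if_splits)
      have b0: "y i \<le> F y i" if "lab y i = 0" using that mx by (auto simp: lab_def split: if_splits)
      have b1: "F y i \<le> y i" if "lab y i = 1" using that mx by (auto simp: lab_def split: if_splits)
      have "lab x i = 0 \<and> lab y i = 1 \<or> lab x i = 1 \<and> lab y i = 0"
        using lx rs(3) unfolding x_def y_def by linarith
      thus ?thesis using a0 a1 b0 b1 by auto
    qed
    have "\<bar>F z i - z i\<bar> \<le> \<bar>F z i - F x i\<bar> + \<bar>F x i - x i\<bar> + \<bar>x i - z i\<bar>" by linarith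
    also have "\<dots> \<le> \<bar>F z i - F x i\<bar> + (\<bar>F x i - F y i\<bar> + \<bar>x i - y i\<bar>) + \<bar>x i - z i\<bar>"
      using Fx by linarith
    also have "\<dots> \<le> K * (n/p) + (K * (2*n/p) + 2*n/p) + n/p"
    proof -
      have "\<bar>F z i - F x i\<bar> \<le> K * (\<Sum>j<n. \<bar>z j - x j\<bar>)" using one[of "\<lambda>j. F z j - F x j"] lip[OF zQ xQ] by linarith
      also have "\<dots> \<le> K * (n/p)" using xz K by (intro mult_left_mono) (auto simp: abs_minus_commute)
      finally have 1: "\<bar>F z i - F x i\<bar> \<le> K * (n/p)" .
      have "\<bar>F x i - F y i\<bar> \<le> K * (\<Sum>j<n. \<bar>x j - y j\<bar>)" using one[of "\<lambda>j. F x j - F y j"] lip[OF xQ yQ] by linarith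
      also have "\<dots> \<le> K * (2*n/p)" using xy K by (intro mult_left_mono) auto
      finally have 2: "\<bar>F x i - F y i\<bar> \<le> K * (2*n/p)" .
      have 3: "\<bar>x i - y i\<bar> \<le> 2*n/p" using one[of "\<lambda>j. x j - y j"] xy by linarith
      have 4: "\<bar>x i - z i\<bar> \<le> n/p" using one[of "\<lambda>j. x j - z j"] xz by linarith
      show ?thesis using 1 2 3 4 by linarith
    qed
    also have "\<dots> = (3*K+3) * n / p" by (simp add: field_simps add_divide_distrib)
    also have "\<dots> < d / n"
    proof -
      have "(3*K+3) * n * n < real p * d" using p d by (simp add: field_simps)
      thus ?thesis using n p0 d by (simp add: field_simps)
    qed
    finally show ?thesis .
  qed
  have "(\<Sum>i<n. \<bar>F z i - z i\<bar>) < (\<Sum>i<n. d / n)"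
    using n coord by (intro sum_strict_mono) auto
  also have "\<dots> = d" using n by simp
  finally show False using far[OF zQ] by linarith
qed



lemma quot_lip:
  fixes p q p' q' c :: real
  assumes "0 \<le> p'" "p' \<le> q'" "0 < c" "c \<le> q" "c \<le> q'"
  shows "\<bar>p/q - p'/q'\<bar> \<le> (\<bar>p - p'\<bar> + \<bar>q - q'\<bar>) / c"
proof -
  have q0: "q > 0" "q' > 0" using assms by auto
  have eq: "p/q - p'/q' = (p - p')/q + ((p'/q') * (q' - q)) / q"
    using q0 by (simp add: field_simps)
  have 1: "\<bar>(p - p')/q\<bar> \<le> \<bar>p - p'\<bar> / c"
  proof -
    have "\<bar>(p - p')/q\<bar> = \<bar>p - p'\<bar> / q" using q0 by simp
    also have "\<dots> \<le> \<bar>p - p'\<bar> / c" using assms by (intro divide_left_mono) auto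
    finally show ?thesis .
  qed
  have r: "\<bar>p'/q'\<bar> \<le> 1" using assms q0 by simp
  have 3: "\<bar>(p'/q') * (q' - q)\<bar> \<le> \<bar>q - q'\<bar>"
  proof -
    have "\<bar>(p'/q') * (q' - q)\<bar> = \<bar>p'/q'\<bar> * \<bar>q - q'\<bar>" by (simp add: abs_mult abs_minus_commute)
    also have "\<dots> \<le> \<bar>q - q'\<bar>" using r by (intro mult_left_le_one_le) auto
    finally show ?thesis .
  qed
  have 2: "\<bar>((p'/q') * (q' - q)) / q\<bar> \<le> \<bar>q - q'\<bar> / c"
  proof -
    have "\<bar>((p'/q') * (q' - q)) / q\<bar> = \<bar>(p'/q') * (q' - q)\<bar> / q" using q0 by simp
    also have "\<dots> \<le> \<bar>q - q'\<bar> / q" using 3 q0 by (intro divide_right_mono) auto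
    also have "\<dots> \<le> \<bar>q - q'\<bar> / c" using assms by (intro divide_left_mono) auto
    finally show ?thesis .
  qed
  have "\<bar>p/q - p'/q'\<bar> \<le> \<bar>(p - p')/q\<bar> + \<bar>((p'/q') * (q' - q)) / q\<bar>"
    unfolding eq by (rule abs_triangle_ineq)
  also have "\<dots> \<le> \<bar>p - p'\<bar> / c + \<bar>q - q'\<bar> / c" using 1 2 by linarith
  also have "\<dots> = (\<bar>p - p'\<bar> + \<bar>q - q'\<bar>) / c" by (simp add: add_divide_distrib)
  finally show ?thesis .
qed

definition rr :: "nat \<Rightarrow> (nat \<Rightarrow> real) \<Rightarrow> nat \<Rightarrow> real" where
  "rr n t i = (t i + (if i = 0 then max 0 (1 - (\<Sum>j<n. t j)) else 0)) / max 1 (\<Sum>j<n. t j)"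

lemma rr_num_sum:
  fixes n :: nat and t :: "nat \<Rightarrow> real"
  assumes "0 < n"
  shows "(\<Sum>i<n. t i + (if i = 0 then c else 0)) = (\<Sum>j<n. t j) + (c::real)"
proof -
  have "(\<Sum>i<n. (if i = 0 then c else 0)) = (if 0 \<in> {..<n} then c else 0)"
    by (rule sum.delta) simp
  hence "(\<Sum>i<n. (if i = 0 then c else 0)) = c" using assms by simp
  thus ?thesis by (simp add: sum.distrib)
qed

lemma rr_simplex:
  assumes n: "0 < n" and t: "\<forall>j<n. 0 \<le> t j"
  shows "(\<forall>i<n. 0 \<le> rr n t i \<and> rr n t i \<le> 1) \<and> (\<Sum>i<n. rr n t i) = 1"
proof -
  define s where "s = (\<Sum>j<n. t j)"
  define N where "N i = t i + (if i = 0 then max 0 (1 - s) else 0)" for i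
  have N0: "0 \<le> N i" if "i < n" for i using t that by (auto simp: N_def)
  have sumN: "(\<Sum>i<n. N i) = max 1 s"
    unfolding N_def using rr_num_sum[OF n, of t "max 0 (1 - s)"] by (simp add: s_def)
  have Nle: "N i \<le> max 1 s" if "i < n" for i
    using member_le_sum[of i "{..<n}" N] N0 that sumN by auto
  have rr: "rr n t i = N i / max 1 s" for i by (simp add: rr_def N_def s_def)
  show ?thesis
  proof (intro conjI allI impI)
    fix i assume "i < n"
    thus "0 \<le> rr n t i" "rr n t i \<le> 1" using N0 Nle by (auto simp: rr)
  next
    show "(\<Sum>i<n. rr n t i) = 1" unfolding rr using sumN by (simp add: sum_divide_distrib[symmetric])
  qed
qed

lemma rr_id:
  assumes n: "0 < n" and t: "\<forall>j<n. 0 \<le> t j" and s: "(\<Sum>j<n. t j) = 1" and i: "i < n"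
  shows "rr n t i = t i"
  using s by (simp add: rr_def)

lemma rr_lip:
  assumes n: "0 < n" and t: "\<forall>j<n. 0 \<le> t j" and t': "\<forall>j<n. 0 \<le> t' j"
  shows "(\<Sum>i<n. \<bar>rr n t i - rr n t' i\<bar>) \<le> (n + 2) * (\<Sum>i<n. \<bar>t i - t' i\<bar>)"
proof -
  define s where "s = (\<Sum>j<n. t j)"
  define s' where "s' = (\<Sum>j<n. t' j)"
  define L where "L = (\<Sum>i<n. \<bar>t i - t' i\<bar>)"
  define N where "N i = t i + (if i = 0 then max 0 (1 - s) else 0)" for i
  define N' where "N' i = t' i + (if i = 0 then max 0 (1 - s') else 0)" for i
  have N0: "0 \<le> N' i" if "i < n" for i using t' that by (auto simp: N'_def)
  have sumN: "(\<Sum>i<n. N' i) = max 1 s'"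
    unfolding N'_def using rr_num_sum[OF n, of t' "max 0 (1 - s')"] by (simp add: s'_def)
  have Nle: "N' i \<le> max 1 s'" if "i < n" for i
    using member_le_sum[of i "{..<n}" N'] N0 that sumN by auto
  have rr: "rr n t i = N i / max 1 s" "rr n t' i = N' i / max 1 s'" for i
    by (simp_all add: rr_def N_def s_def N'_def s'_def)
  have ss: "\<bar>s - s'\<bar> \<le> L"
    unfolding s_def s'_def L_def by (simp add: sum_subtractf[symmetric] sum_abs)
  have "(\<Sum>i<n. \<bar>rr n t i - rr n t' i\<bar>) \<le> (\<Sum>i<n. \<bar>N i - N' i\<bar> + \<bar>max 1 s - max 1 s'\<bar>)"
  proof (rule sum_mono)
    fix i assume i: "i \<in> {..<n}"
    show "\<bar>rr n t i - rr n t' i\<bar> \<le> \<bar>N i - N' i\<bar> + \<bar>max 1 s - max 1 s'\<bar>"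
      unfolding rr using quot_lip[of "N' i" "max 1 s'" 1 "max 1 s" "N i"] N0 Nle i by auto
  qed
  also have "\<dots> = (\<Sum>i<n. \<bar>N i - N' i\<bar>) + n * \<bar>max 1 s - max 1 s'\<bar>"
    by (simp add: sum.distrib)
  also have "(\<Sum>i<n. \<bar>N i - N' i\<bar>) \<le> (\<Sum>i<n. \<bar>t i - t' i\<bar> + (if i = 0 then \<bar>s - s'\<bar> else 0))"
    by (rule sum_mono) (auto simp: N_def N'_def)
  also have "\<dots> = L + \<bar>s - s'\<bar>"
    using rr_num_sum[OF n, of "\<lambda>i. \<bar>t i - t' i\<bar>" "\<bar>s - s'\<bar>"] by (simp add: L_def)
  also have "n * \<bar>max 1 s - max 1 s'\<bar> \<le> n * L"
    using ss by (intro mult_left_mono) auto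
  finally show ?thesis using ss by (simp add: L_def[symmetric] algebra_simps)
qed

lemma comb_lip:
  fixes e :: "nat \<Rightarrow> 'a::real_normed_vector"
  shows "norm ((\<Sum>i<n. t i *\<^sub>R e i) - (\<Sum>i<n. t' i *\<^sub>R e i))
     \<le> (\<Sum>i<n. norm (e i)) * (\<Sum>i<n. \<bar>t i - t' i\<bar>)"
proof -
  have "norm ((\<Sum>i<n. t i *\<^sub>R e i) - (\<Sum>i<n. t' i *\<^sub>R e i)) = norm (\<Sum>i<n. (t i - t' i) *\<^sub>R e i)"
    by (simp add: sum_subtractf[symmetric] scaleR_diff_left)
  also have "\<dots> \<le> (\<Sum>i<n. \<bar>t i - t' i\<bar> * norm (e i))"
    by (rule order_trans[OF norm_sum]) simp
  also have "\<dots> \<le> (\<Sum>i<n. \<bar>t i - t' i\<bar> * (\<Sum>j<n. norm (e j)))"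
    by (rule sum_mono, rule mult_left_mono) (auto intro: member_le_sum)
  finally show ?thesis by (simp add: sum_distrib_right[symmetric] mult.commute)
qed



theorem proposition3p1:
  fixes f :: "'a::real_normed_vector \<Rightarrow> 'a \<Rightarrow> real" and C :: "'a set"
  assumes "C \<noteq> {}" and "convex C"
    and "\<forall>x \<in> C. lsc (f x)"
    and "properly_quasi_monotone f C"
  shows "fip_star f C"
  unfolding fip_star_def
proof (intro allI impI)
  fix A assume A: "finite A \<and> A \<noteq> {} \<and> A \<subseteq> C"
  hence finA: "finite A" and neA: "A \<noteq> {}" and AC: "A \<subseteq> C" by auto
  have pqm: "\<And>B x. finite B \<Longrightarrow> B \<noteq> {} \<Longrightarrow> B \<subseteq> C \<Longrightarrow> x \<in> convex hull B \<Longrightarrow> Min ((\<lambda>a. f a x) ` B) \<le> 0"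
    using assms(4) unfolding properly_quasi_monotone_def by blast
  show "\<exists>x \<in> convex hull A. Max ((\<lambda>a. f a x) ` A) \<le> 0"
  proof (rule ccontr)
    assume "\<not> ?thesis"
    hence pos: "\<exists>a\<in>A. 0 < f a x" if "x \<in> convex hull A" for x
    proof -
      assume H: "\<not> (\<exists>x \<in> convex hull A. Max ((\<lambda>a. f a x) ` A) \<le> 0)"
      have "Max ((\<lambda>a. f a x) ` A) \<in> (\<lambda>a. f a x) ` A" using finA neA by (intro Max_in) auto
      thus ?thesis using H that by force
    qed
    define n where "n = card A"
    have n0: "0 < n" using finA neA by (simp add: n_def card_gt_0_iff)
    obtain e where e: "bij_betw e {..<n} A"
      using ex_bij_betw_nat_finite[OF finA] by (auto simp: n_def atLeast0LessThan)
    have eA: "e i \<in> A" if "i < n" for i using e that by (auto simp: bij_betw_def)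
    have eimg: "e ` {..<n} = A" using e by (simp add: bij_betw_def)
    define Cl where "Cl i = {y. f (e i) y \<le> 0}" for i
    have Clc: "closed (Cl i)" if "i < n" for i
      using assms(3) eA[OF that] AC unfolding Cl_def lsc_def by blast
    have Cln: "Cl i \<noteq> {}" if "i < n" for i
    proof -
      have "Min ((\<lambda>a. f a (e i)) ` {e i}) \<le> 0"
        using eA[OF that] AC by (intro pqm) auto
      hence "e i \<in> Cl i" by (simp add: Cl_def)
      thus ?thesis by blast
    qed
    define h where "h i x = infdist x (Cl i)" for i x
    define h0 where "h0 x = (\<Sum>i<n. h i x)" for x
    have cpt: "compact (convex hull A)" by (rule finite_imp_compact_convex_hull[OF finA])
    have hne: "convex hull A \<noteq> {}" using neA by simp
    have h0c: "continuous_on (convex hull A) h0"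
      unfolding h0_def h_def by (intro continuous_intros)
    obtain x0 where x0: "x0 \<in> convex hull A" "\<And>y. y \<in> convex hull A \<Longrightarrow> h0 x0 \<le> h0 y"
      using continuous_attains_inf[OF cpt hne h0c] by blast
    define m where "m = h0 x0"
    have hpos: "0 < h0 x" if x: "x \<in> convex hull A" for x
    proof -
      obtain a where a: "a \<in> A" "0 < f a x" using pos[OF x] by blast
      obtain i where i: "i < n" "e i = a" using a(1) eimg by auto
      have "x \<notin> Cl i" using a i by (auto simp: Cl_def)
      hence "h i x \<noteq> 0" using in_closed_iff_infdist_zero[OF Clc[OF i(1)] Cln[OF i(1)]]
        by (simp add: h_def)
      hence "0 < h i x" using infdist_nonneg[of x "Cl i"] by (simp add: h_def)
      also have "h i x \<le> h0 x" unfolding h0_def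
        using i(1) by (intro member_le_sum) (auto simp: h_def infdist_nonneg)
      finally show ?thesis .
    qed
    have m0: "0 < m" using hpos[OF x0(1)] by (simp add: m_def)
    define c where "c = m / (2 * n)"
    have c0: "0 < c" using m0 n0 by (simp add: c_def)
    define hp where "hp i x = max 0 (h i x - c)" for i x
    define S where "S x = (\<Sum>i<n. hp i x)" for x
    have hp0: "0 \<le> hp i x" for i x by (simp add: hp_def)
    have hpS: "hp i x \<le> S x" if "i < n" for i x
      unfolding S_def using that hp0 by (intro member_le_sum) auto
    have Sc: "c \<le> S x" if x: "x \<in> convex hull A" for x
    proof -
      have "\<exists>i<n. m / n \<le> h i x"
      proof (rule ccontr)
        assume "\<not> ?thesis"
        hence "h0 x < (\<Sum>i<n. m / n)" unfolding h0_def using n0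
          by (intro sum_strict_mono) (auto simp: not_le)
        also have "\<dots> = m" using n0 by simp
        finally show False using x0(2)[OF x] by (simp add: m_def)
      qed
      then obtain i where i: "i < n" "m / n \<le> h i x" by blast
      have "c \<le> hp i x" using i(2) unfolding hp_def c_def using n0 m0
        by (simp add: field_simps)
      also have "\<dots> \<le> S x" by (rule hpS[OF i(1)])
      finally show ?thesis .
    qed
    define \<beta> where "\<beta> i x = hp i x / max (S x) c" for i x
    have \<beta>01: "0 \<le> \<beta> i x \<and> \<beta> i x \<le> 1" if "i < n" for i x
    proof -
      have a: "hp i x \<le> max (S x) c" using hpS[OF that, of x] by linarith
      have b: "0 < max (S x) c" using c0 by linarith
      show ?thesis unfolding \<beta>_def using a b hp0[of i x] by (simp add: divide_le_eq_1)
    qed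
    have \<beta>sum: "(\<Sum>i<n. \<beta> i x) = 1" if "x \<in> convex hull A" for x
    proof -
      have "max (S x) c = S x" using Sc[OF that] by simp
      hence "(\<Sum>i<n. \<beta> i x) = S x / S x" by (simp add: \<beta>_def S_def sum_divide_distrib[symmetric])
      thus ?thesis using Sc[OF that] c0 by simp
    qed
    have hlip: "\<bar>hp i x - hp i y\<bar> \<le> dist x y" for i x y
    proof -
      have "\<bar>h i x - h i y\<bar> \<le> dist x y" unfolding h_def by (rule infdist_triangle_abs)
      thus ?thesis unfolding hp_def by linarith
    qed
    define Kb where "Kb = n * (1 + n) / c"
    have \<beta>lip: "(\<Sum>i<n. \<bar>\<beta> i x - \<beta> i y\<bar>) \<le> Kb * dist x y" for x y
    proof -
      have Sl: "\<bar>max (S x) c - max (S y) c\<bar> \<le> n * dist x y"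
      proof -
        have "\<bar>S x - S y\<bar> \<le> (\<Sum>i<n. \<bar>hp i x - hp i y\<bar>)"
          unfolding S_def by (simp add: sum_subtractf[symmetric] sum_abs)
        also have "\<dots> \<le> (\<Sum>i<n. dist x y)" by (intro sum_mono hlip)
        finally have "\<bar>S x - S y\<bar> \<le> n * dist x y" by simp
        thus ?thesis by linarith
      qed
      have "(\<Sum>i<n. \<bar>\<beta> i x - \<beta> i y\<bar>) \<le> (\<Sum>i<n. (dist x y + n * dist x y) / c)"
      proof (rule sum_mono)
        fix i assume i: "i \<in> {..<n}"
        have "\<bar>\<beta> i x - \<beta> i y\<bar> \<le> (\<bar>hp i x - hp i y\<bar> + \<bar>max (S x) c - max (S y) c\<bar>) / c"
          unfolding \<beta>_def
        proof (rule quot_lip)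
          show "hp i y \<le> max (S y) c" using hpS[of i y] i by force
        qed (use c0 hp0 in auto)
        also have "\<dots> \<le> (dist x y + n * dist x y) / c"
          by (rule divide_right_mono[OF add_mono[OF hlip[of i x y] Sl]]) (use c0 in simp)
        finally show "\<bar>\<beta> i x - \<beta> i y\<bar> \<le> (dist x y + n * dist x y) / c" .
      qed
      also have "\<dots> = Kb * dist x y" by (simp add: Kb_def field_simps)
      finally show ?thesis .
    qed
    have Kb0: "0 \<le> Kb" using c0 by (simp add: Kb_def)
    define g where "g t = (\<Sum>i<n. t i *\<^sub>R e i)" for t
    define M where "M = (\<Sum>i<n. norm (e i))"
    have M0: "0 \<le> M" by (simp add: M_def sum_nonneg)
    have glip: "dist (g t) (g t') \<le> M * (\<Sum>i<n. \<bar>t i - t' i\<bar>)" for t t'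
      unfolding dist_norm g_def M_def by (rule comb_lip)
    have ghull: "g t \<in> convex hull A" if "\<forall>i<n. 0 \<le> t i" "(\<Sum>i<n. t i) = 1" for t
      unfolding g_def using that eA
      by (intro convex_sum) (auto intro: hull_inc)
    define Q where "Q t = (\<forall>j<n. 0 \<le> t j \<and> t j \<le> (1::real))" for t
    define F where "F t = (\<lambda>i. \<beta> i (g (rr n t)))" for t
    have rrs: "\<forall>i<n. 0 \<le> rr n t i \<and> rr n t i \<le> 1" "(\<Sum>i<n. rr n t i) = 1" if "Q t" for t
      using rr_simplex[OF n0, of t] that by (auto simp: Q_def)
    define K where "K = Kb * M * (real n + 2)"
    have K0: "0 \<le> K" using Kb0 M0 by (simp add: K_def)
    have Flip: "(\<Sum>i<n. \<bar>F x i - F y i\<bar>) \<le> K * (\<Sum>i<n. \<bar>x i - y i\<bar>)" if "Q x" "Q y" for x y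
    proof -
      have "(\<Sum>i<n. \<bar>F x i - F y i\<bar>) \<le> Kb * dist (g (rr n x)) (g (rr n y))"
        unfolding F_def by (rule \<beta>lip)
      also have "\<dots> \<le> Kb * (M * (\<Sum>i<n. \<bar>rr n x i - rr n y i\<bar>))"
        using Kb0 glip by (intro mult_left_mono) auto
      also have "\<dots> \<le> Kb * (M * ((real n + 2) * (\<Sum>i<n. \<bar>x i - y i\<bar>)))"
      proof -
        have R: "(\<Sum>i<n. \<bar>rr n x i - rr n y i\<bar>) \<le> (real n + 2) * (\<Sum>i<n. \<bar>x i - y i\<bar>)"
          using rr_lip[OF n0, of x y] that unfolding Q_def by blast
        show ?thesis by (rule mult_left_mono[OF mult_left_mono[OF R M0] Kb0])
      qed
      finally show ?thesis by (simp add: K_def mult.assoc)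
    qed
    define \<epsilon> where "\<epsilon> = c / (M * (real n + 2) + 1)"
    have Mn: "0 < M * (real n + 2) + 1" proof -
      have "0 \<le> M * (real n + 2)" using M0 by simp
      thus ?thesis by linarith
    qed
    have eps0: "0 < \<epsilon>" unfolding \<epsilon>_def using c0 Mn by (rule divide_pos_pos)
    have epsc: "M * (real n + 2) * \<epsilon> < c"
    proof -
      have "M * (real n + 2) * \<epsilon> = c * (M * (real n + 2) / (M * (real n + 2) + 1))"
        by (simp add: \<epsilon>_def)
      also have "\<dots> < c * 1" using c0 Mn by (intro mult_strict_left_mono) auto
      finally show ?thesis by simp
    qed
    obtain t where tQ: "Q t" and tfix: "(\<Sum>i<n. \<bar>F t i - t i\<bar>) < \<epsilon>"
    proof -
      have "\<exists>z. (\<forall>j<n. 0 \<le> z j \<and> z j \<le> 1) \<and> (\<Sum>i<n. \<bar>F z i - z i\<bar>) < \<epsilon>"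
      proof (rule approx_fixpoint[OF n0 K0 eps0])
        show "0 \<le> F x i \<and> F x i \<le> 1" if "i < n" for x i using \<beta>01[OF that] by (simp add: F_def)
        show "(\<Sum>i<n. \<bar>F x i - F y i\<bar>) \<le> K * (\<Sum>i<n. \<bar>x i - y i\<bar>)"
          if "\<forall>j<n. 0 \<le> x j \<and> x j \<le> 1" "\<forall>j<n. 0 \<le> y j \<and> y j \<le> 1" for x y
          using Flip that by (simp add: Q_def)
      qed
      thus ?thesis using that by (auto simp: Q_def)
    qed
    define x where "x = g (rr n t)"
    have xA: "x \<in> convex hull A" unfolding x_def using rrs[OF tQ] by (intro ghull) auto
    define \<mu> where "\<mu> = F t"
    have \<mu>x: "\<mu> i = \<beta> i x" for i by (simp add: \<mu>_def F_def x_def)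
    have \<mu>Q: "Q \<mu>" using \<beta>01 by (simp add: Q_def \<mu>x)
    have \<mu>sum: "(\<Sum>i<n. \<mu> i) = 1" using \<beta>sum[OF xA] by (simp add: \<mu>x)
    have rr\<mu>: "rr n \<mu> i = \<mu> i" if "i < n" for i
      using rr_id[OF n0 _ \<mu>sum that] \<mu>Q by (simp add: Q_def)
    define y where "y = g \<mu>"
    have dxy: "dist x y < c"
    proof -
      have "dist x y \<le> M * (\<Sum>i<n. \<bar>rr n t i - \<mu> i\<bar>)" unfolding x_def y_def by (rule glip)
      also have "(\<Sum>i<n. \<bar>rr n t i - \<mu> i\<bar>) = (\<Sum>i<n. \<bar>rr n t i - rr n \<mu> i\<bar>)"
        using rr\<mu> by simp
      also have "\<dots> \<le> (real n + 2) * (\<Sum>i<n. \<bar>t i - \<mu> i\<bar>)"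
        using rr_lip[OF n0, of t \<mu>] tQ \<mu>Q by (auto simp: Q_def)
      also have "(\<Sum>i<n. \<bar>t i - \<mu> i\<bar>) = (\<Sum>i<n. \<bar>F t i - t i\<bar>)"
        by (simp add: \<mu>_def abs_minus_commute)
      finally have "dist x y \<le> M * ((real n + 2) * (\<Sum>i<n. \<bar>F t i - t i\<bar>))"
        using M0 by (simp add: mult_left_mono)
      also have "\<dots> \<le> M * ((real n + 2) * \<epsilon>)"
        using tfix M0 by (intro mult_left_mono) auto
      finally show ?thesis using epsc by (simp add: mult.assoc)
    qed
    define B where "B = {i\<in>{..<n}. 0 < \<mu> i}"
    have finB: "finite B" by (simp add: B_def)
    have Bsub: "B \<subseteq> {..<n}" by (auto simp: B_def)
    have sumB: "(\<Sum>i\<in>B. \<mu> i) = (\<Sum>i<n. \<mu> i)"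
    proof (rule sum.mono_neutral_left)
      show "\<forall>i\<in>{..<n} - B. \<mu> i = 0" using \<mu>Q by (force simp: B_def Q_def)
    qed (auto simp: B_def)
    have neB: "B \<noteq> {}"
    proof
      assume "B = {}"
      thus False using sumB \<mu>sum by simp
    qed
    have yB: "y = (\<Sum>i\<in>B. \<mu> i *\<^sub>R e i)"
      unfolding y_def g_def
    proof (rule sum.mono_neutral_right)
      show "\<forall>i\<in>{..<n} - B. \<mu> i *\<^sub>R e i = 0" using \<mu>Q by (force simp: B_def Q_def)
    qed (auto simp: B_def)
    have yhull: "y \<in> convex hull (e ` B)"
      unfolding yB using finB sumB \<mu>sum
      by (intro convex_sum) (auto simp: B_def intro: hull_inc)
    have fpos: "0 < f (e i) y" if i: "i \<in> B" for i
    proof -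
      have "0 < \<beta> i x" using i by (simp add: B_def \<mu>x)
      hence "0 < hp i x" using c0 by (simp add: \<beta>_def zero_less_divide_iff)
      hence hc: "c < h i x" by (simp add: hp_def)
      show ?thesis
      proof (rule ccontr)
        assume "\<not> ?thesis"
        hence "y \<in> Cl i" by (simp add: Cl_def)
        hence "h i x \<le> dist x y" unfolding h_def by (rule infdist_le)
        thus False using hc dxy by linarith
      qed
    qed
    have "Min ((\<lambda>a. f a y) ` e ` B) \<le> 0"
      using finB neB Bsub eA AC yhull by (intro pqm) auto
    moreover have "Min ((\<lambda>a. f a y) ` e ` B) \<in> (\<lambda>a. f a y) ` e ` B"
      using finB neB by (intro Min_in) auto
    ultimately show False using fpos by force
  qed
qed

end
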